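(* Let $\mathbb{F}$ be a field, $d\geq3$ and $V$ a vector space over $\mathbb{F}$ of dimension $d+1$. Let $E^*_0,\dots,E^*_d$ be a system of mutually orthogonal idempotents in $\mathrm{End}(V)$ and $A\in\mathrm{End}(V)$ with $E^*_iAE^*_j=0$ if $|i-j|>1$ and $E^*_iAE^*_j\neq0$ if $|i-j|=1$. Assume $A$ is multiplicity-free and bipartite with primitive idempotents $E_0,\dots,E_d$ and eigenvalues $\theta_0,\dots,\theta_d$. Let $\theta^*_0,\dots,\theta^*_d\in\mathbb{F}$ be mutually distinct and $A^*=\sum_i\theta^*_iE^*_i$. Assume $E_0$ is normalizing, $(E_0,E_1)$ is a tail, and $E_2$ is the vertex of $\Delta$ other than $E_0$ adjacent to $E_1$. Let $a^*_i=\operatorname{tr}(E_iA^* )$, let $b^*_0c^*_1$ be as in the context, and put $\psi=\theta^*_1+\theta^*_0-a^*_1-a^*_0$, $\zeta=a^*_0a^*_1-b^*_0c^*_1-\theta^*_0\theta^*_1$. Then $$\psi=\frac{\theta_1(\theta^*_{d-1}-\theta^*_0)-\theta_2(\theta^*_d-\theta^*_1)}{\theta_2-\theta_1},\qquad \zeta=\frac{\theta_2\theta^*_0-\theta_0\theta^*_1}{\theta_2-\theta_0}\cdot\frac{\theta_2(\theta^*_d-\theta^*_1)-\theta_1(\theta^*_{d-1}-\theta^*_0)}{\theta_2-\theta_1}.$$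
   Context: A system of mutually orthogonal idempotents: $E^*_iE^*_j=\delta_{ij}E^*_i$, $\operatorname{rank}E^*_i=1$. $A$ multiplicity-free: $d+1$ distinct eigenvalues in $\mathbb{F}$; $E_i$ is the projection onto the $\theta_i$-eigenspace along the other eigenspaces. Bipartite: $\operatorname{tr}(E^*_iA)=0$ for all $i$. $\Delta$: graph on $E_0,\dots,E_d$ with $E_i\neq E_j$ adjacent iff $E_iA^*E_j\neq0$. $(E_0,E_1)$ is a tail if $E_0$ is adjacent to no vertex other than $E_1$ and $E_1$ is adjacent to at most one vertex other than $E_0$. The matrix $Y$ representing a map $X$ w.r.t. a basis $u_0,\dots,u_d$ satisfies $Xu_j=\sum_iY_{ij}u_i$. An eigenvalue $\theta$ of $A$ is normalizing if some basis with $v_i\in E^*_iV$ makes every row sum of the matrix representing $A$ equal to $\theta$; $E_i$ is normalizing if $\theta_i$ is. For any basis $w_0,\dots,w_d$ with $w_i\in E_iV$, $b^*_0$ and $c^*_1$ are the $(0,1)$- and $(1,0)$-entries of the matrix representing $A^*$; the product $b^*_0c^*_1$ is independent of the choice. *)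

theory Defs
  imports "Jordan_Normal_Form.Char_Poly" "Jordan_Normal_Form.DL_Rank"
begin

text \<open>Linear maps on V = F^n (n = d+1) are represented by n x n matrices.\<close>

definition mtrace :: "'a::comm_ring_1 mat \<Rightarrow> 'a" where
  "mtrace M = (\<Sum>i<dim_row M. M $$ (i, i))"

definition orth_idem_system :: "nat \<Rightarrow> (nat \<Rightarrow> 'a::field mat) \<Rightarrow> bool" where
  "orth_idem_system d Es \<longleftrightarrow>
     (\<forall>i\<le>d. Es i \<in> carrier_mat (d+1) (d+1) \<and> vec_space.rank (d+1) (Es i) = 1) \<and>
     (\<forall>i\<le>d. \<forall>j\<le>d. Es i * Es j = (if i = j then Es i else 0\<^sub>m (d+1) (d+1)))"

text \<open>A is multiplicity-free with eigenvalues th_0..th_d (distinct, in F) and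
  E_i is the projection onto the th_i-eigenspace along the other eigenspaces.\<close>
definition primitive_idempotents ::
  "nat \<Rightarrow> 'a::field mat \<Rightarrow> (nat \<Rightarrow> 'a) \<Rightarrow> (nat \<Rightarrow> 'a mat) \<Rightarrow> bool" where
  "primitive_idempotents d A th E \<longleftrightarrow>
     (\<forall>i\<le>d. \<forall>j\<le>d. i \<noteq> j \<longrightarrow> th i \<noteq> th j) \<and>
     (\<forall>i\<le>d. eigenvalue A (th i)) \<and>
     (\<forall>i\<le>d. E i \<in> carrier_mat (d+1) (d+1) \<and>
        (\<forall>j\<le>d. \<forall>v \<in> carrier_vec (d+1). A *\<^sub>v v = th j \<cdot>\<^sub>v v \<longrightarrow>
            E i *\<^sub>v v = (if i = j then v else 0\<^sub>v (d+1))))"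

definition bipartite :: "nat \<Rightarrow> (nat \<Rightarrow> 'a::field mat) \<Rightarrow> 'a mat \<Rightarrow> bool" where
  "bipartite d Es A \<longleftrightarrow> (\<forall>i\<le>d. mtrace (Es i * A) = 0)"

definition Delta_adj ::
  "nat \<Rightarrow> (nat \<Rightarrow> 'a::field mat) \<Rightarrow> 'a mat \<Rightarrow> nat \<Rightarrow> nat \<Rightarrow> bool" where
  "Delta_adj d E As i j \<longleftrightarrow> E i \<noteq> E j \<and> E i * As * E j \<noteq> 0\<^sub>m (d+1) (d+1)"

definition is_tail :: "nat \<Rightarrow> (nat \<Rightarrow> 'a::field mat) \<Rightarrow> 'a mat \<Rightarrow> bool" where
  "is_tail d E As \<longleftrightarrow>
     (\<forall>j\<le>d. Delta_adj d E As 0 j \<longrightarrow> E j = E 1) \<and>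
     card {E j | j. j \<le> d \<and> Delta_adj d E As 1 j \<and> E j \<noteq> E 0} \<le> 1"

text \<open>th is normalizing: some basis v_0..v_d (the columns of an invertible P)
  with v_i in E*_i V such that the matrix Y representing A (A v_j = sum_i Y_ij v_i,
  i.e. A P = P Y) has all row sums equal to th.\<close>
definition normalizing :: "nat \<Rightarrow> (nat \<Rightarrow> 'a::field mat) \<Rightarrow> 'a mat \<Rightarrow> 'a \<Rightarrow> bool" where
  "normalizing d Es A th \<longleftrightarrow>
     (\<exists>P Y. P \<in> carrier_mat (d+1) (d+1) \<and> Y \<in> carrier_mat (d+1) (d+1) \<and>
        invertible_mat P \<and>
        (\<forall>i\<le>d. col P i \<in> (\<lambda>v. Es i *\<^sub>v v) ` carrier_vec (d+1)) \<and>
        A * P = P * Y \<and>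
        (\<forall>i\<le>d. (\<Sum>j\<le>d. Y $$ (i, j)) = th))"

end

theory Submission
  imports Defs
begin

lemma scalar_part:
  fixes t0 t1 t2 T0 T1 Tm Td a0 a1 bc :: "'a::field"
  assumes E1: "t0*(T1-a0) = t1*(T0-a0)" and E2: "t1*(Td-a0) = t0*(Tm-a0)"
    and E3: "t0*((T1-a0)*(T1-a1) - bc) = t2*((T0-a0)*(T0-a1) - bc)"
    and E4: "t2*((Td-a0)*(Td-a1) - bc) = t0*((Tm-a0)*(Tm-a1) - bc)"
    and n1: "t2 \<noteq> t1" and n2: "t2 \<noteq> t0" and n3: "Td \<noteq> T0"
  shows "T1 + T0 - a1 - a0 = (t1 * (Tm - T0) - t2 * (Td - T1)) / (t2 - t1)
     \<and> a0 * a1 - bc - T0 * T1 = (t2 * T0 - t0 * T1) / (t2 - t0)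
                 * ((t2 * (Td - T1) - t1 * (Tm - T0)) / (t2 - t1))"
proof -
  define psi where "psi = T1 + T0 - a1 - a0"
  define zeta where "zeta = a0 * a1 - bc - T0 * T1"
  have "t0*(T1-a0) + t1*(Td-a0) = t1*(T0-a0) + t0*(Tm-a0)" using E1 E2 by simp
  hence ii: "t1*(Td-T0) = t0*(Tm-T1)" by (simp add: algebra_simps)
  have "zeta*(t0-t2) - psi*(t2*T0 - t0*T1) = t0*((T1-a0)*(T1-a1) - bc) - t2*((T0-a0)*(T0-a1) - bc)"
    unfolding psi_def zeta_def by (simp add: algebra_simps)
  hence i: "zeta*(t0-t2) = psi*(t2*T0 - t0*T1)" using E3 by simp
  have "(psi*(t2-t1)*(Td-T0) - (t1 * (Tm - T0) - t2 * (Td - T1))*(Td-T0))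
     = (t2*((Td-a0)*(Td-a1) - bc) - t0*((Tm-a0)*(Tm-a1) - bc)) + (zeta*(t0-t2) - psi*(t2*T0 - t0*T1))
       - (Tm - T0 + psi) * (t1*(Td-T0) - t0*(Tm-T1))"
    unfolding psi_def zeta_def by (simp add: algebra_simps)
  hence "psi*(t2-t1)*(Td-T0) = (t1 * (Tm - T0) - t2 * (Td - T1))*(Td-T0)"
    using E4 i ii by simp
  hence p: "psi*(t2-t1) = t1 * (Tm - T0) - t2 * (Td - T1)" using n3 by simp
  hence p2: "psi = (t1 * (Tm - T0) - t2 * (Td - T1)) / (t2 - t1)" using n1
    by (simp add: eq_divide_eq)
  have z: "zeta = (t2 * T0 - t0 * T1) / (t2 - t0) * (- psi)"
    using i n2 by (simp add: field_simps)
  have m: "(t2 * (Td - T1) - t1 * (Tm - T0)) / (t2 - t1) = - psi"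
    unfolding p2 minus_divide_left by (simp add: algebra_simps)
  show ?thesis using p2 z m unfolding psi_def zeta_def by simp
qed


definition dm :: "nat \<Rightarrow> (nat \<Rightarrow> 'a::comm_ring_1) \<Rightarrow> 'a mat" where
  "dm n f = mat n n (\<lambda>(i,j). if i = j then f i else 0)"

lemma dm_carrier[simp]: "dm n f \<in> carrier_mat n n"
  and dm_dims[simp]: "dim_row (dm n f) = n" "dim_col (dm n f) = n"
  by (auto simp: dm_def)

lemma dm_index[simp]: "i < n \<Longrightarrow> j < n \<Longrightarrow> dm n f $$ (i,j) = (if i = j then f i else 0)"
  by (simp add: dm_def)

lemma sum_single:
  assumes "finite S" "a \<in> S" "\<And>k. k \<in> S \<Longrightarrow> k \<noteq> a \<Longrightarrow> f k = 0"
  shows "sum f S = f a"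
proof -
  have "sum f S = f a + sum f (S - {a})" using assms by (simp add: sum.remove)
  also have "sum f (S - {a}) = 0" using assms by (intro sum.neutral) auto
  finally show ?thesis by simp
qed

lemma mult_dm_right_index:
  assumes M: "M \<in> carrier_mat m n" and i: "i < m" and j: "j < n"
  shows "(M * dm n f) $$ (i,j) = M $$ (i,j) * f j"
proof -
  have "(M * dm n f) $$ (i,j) = (\<Sum>k\<in>{0..<n}. M $$ (i,k) * (if k = j then f k else 0))"
    using M i j by (simp add: scalar_prod_def)
  also have "\<dots> = M $$ (i,j) * (if j = j then f j else 0)"
    by (rule sum_single) (use j in auto)
  finally show ?thesis by simp
qed

lemma mult_dm_left_index:
  assumes M: "M \<in> carrier_mat n m" and i: "i < n" and j: "j < m"
  shows "(dm n f * M) $$ (i,j) = f i * M $$ (i,j)"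
proof -
  have "(dm n f * M) $$ (i,j) = (\<Sum>k\<in>{0..<n}. (if i = k then f i else 0) * M $$ (k,j))"
    using M i j by (simp add: scalar_prod_def)
  also have "\<dots> = (if i = i then f i else 0) * M $$ (i,j)"
    by (rule sum_single) (use i in auto)
  finally show ?thesis by simp
qed

lemma dm_mult_dm: "dm n f * dm n g = dm n (\<lambda>i. f i * g i)"
proof (rule eq_matI)
  fix i j assume "i < dim_row (dm n (\<lambda>i. f i * g i))" "j < dim_col (dm n (\<lambda>i. f i * g i))"
  thus "(dm n f * dm n g) $$ (i, j) = dm n (\<lambda>i. f i * g i) $$ (i, j)"
    by (subst mult_dm_left_index[OF dm_carrier]) auto
qed auto

lemma dm_zero: "dm n (\<lambda>i. 0) = 0\<^sub>m n n"
  by (rule eq_matI) auto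

lemma dm_smult: "dm n (\<lambda>i. c * f i) = c \<cdot>\<^sub>m dm n f"
  by (rule eq_matI) auto

lemma colwise:
  assumes M: "M \<in> carrier_mat n n" and N: "N \<in> carrier_mat n m"
    and h: "\<And>j. j < m \<Longrightarrow> M *\<^sub>v col N j = f j \<cdot>\<^sub>v col N j"
  shows "M * N = N * dm m f"
proof (rule eq_matI)
  fix i j assume i: "i < dim_row (N * dm m f)" and j: "j < dim_col (N * dm m f)"
  hence i': "i < n" and j': "j < m" using N by auto
  have "(M * N) $$ (i,j) = (M *\<^sub>v col N j) $ i" using M N i' j' by simp
  also have "\<dots> = f j * N $$ (i,j)" using h[OF j'] N i' j' by simp
  also have "\<dots> = (N * dm m f) $$ (i,j)" using mult_dm_right_index[OF N i' j'] by simp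
  finally show "(M * N) $$ (i,j) = (N * dm m f) $$ (i,j)" .
qed (use M N in auto)

lemma mtrace_comm:
  assumes M: "M \<in> carrier_mat n m" and N: "N \<in> carrier_mat m n"
  shows "mtrace (M * N) = mtrace (N * M)"
proof -
  have "mtrace (M * N) = (\<Sum>i<n. \<Sum>k\<in>{0..<m}. M $$ (i,k) * N $$ (k,i))"
    using M N by (simp add: mtrace_def scalar_prod_def)
  also have "\<dots> = (\<Sum>k\<in>{0..<m}. \<Sum>i<n. N $$ (k,i) * M $$ (i,k))"
    by (subst sum.swap) (simp add: mult.commute)
  also have "\<dots> = mtrace (N * M)"
    using M N by (simp add: mtrace_def scalar_prod_def atLeast0LessThan)
  finally show ?thesis .
qed

lemma mtrace_dm:
  assumes M: "M \<in> carrier_mat n n" and k: "k < n"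
  shows "mtrace (dm n (\<lambda>i. if i = k then 1 else 0) * M) = M $$ (k,k)"
proof -
  have "mtrace (dm n (\<lambda>i. if i = k then 1 else 0) * M)
      = (\<Sum>i<n. (if i = k then 1 else 0) * M $$ (i,i))"
    unfolding mtrace_def using M by (intro sum.cong) (auto simp del: index_mult_mat simp: index_mult_mat(2,3) mult_dm_left_index[OF M])
  also have "\<dots> = (if k = k then 1 else 0) * M $$ (k,k)"
    by (rule sum_single) (use k in auto)
  finally show ?thesis by simp
qed

lemma mtrace_conj:
  assumes M: "M \<in> carrier_mat n n" and P: "P \<in> carrier_mat n n" and Q: "Q \<in> carrier_mat n n"
    and inv: "P * Q = 1\<^sub>m n"
  shows "mtrace (Q * M * P) = mtrace M"
proof -
  have "mtrace (Q * M * P) = mtrace (P * (Q * M))"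
    using M P Q by (intro mtrace_comm) auto
  also have "P * (Q * M) = P * Q * M" using M P Q by (simp add: assoc_mult_mat)
  finally show ?thesis using inv M by simp
qed

lemma massoc: "A \<in> carrier_mat n n \<Longrightarrow> B \<in> carrier_mat n n \<Longrightarrow> C \<in> carrier_mat n n \<Longrightarrow> A * B * C = A * (B * C)"
  by (rule assoc_mult_mat)

lemma cancel_r: "(A::'a::field mat) \<in> carrier_mat n n \<Longrightarrow> B \<in> carrier_mat n n \<Longrightarrow> B * A = 1\<^sub>m n \<Longrightarrow> X \<in> carrier_mat n n \<Longrightarrow> B * (A * X) = X"
proof -
  assume a: "A \<in> carrier_mat n n" "B \<in> carrier_mat n n" "B * A = 1\<^sub>m n" "X \<in> carrier_mat n n"
  have "B * (A * X) = (B * A) * X" by (rule assoc_mult_mat[symmetric]) (use a in auto)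
  also have "\<dots> = X" using a(3,4) by (simp add: left_mult_one_mat)
  finally show ?thesis .
qed

lemma smult_mat_vec: "M \<in> carrier_mat n m \<Longrightarrow> v \<in> carrier_vec m \<Longrightarrow> (k \<cdot>\<^sub>m M) *\<^sub>v v = k \<cdot>\<^sub>v (M *\<^sub>v v)"
  by (rule eq_vecI) (auto intro!: smult_scalar_prod_distrib[of _ m])



lemma propagate:
  fixes x :: "nat \<Rightarrow> 'a::field" and y :: "nat \<Rightarrow> nat \<Rightarrow> 'a"
  assumes c0: "x 1 * y 1 0 = \<theta> * x 0"
   and cm: "\<And>i. i+2 \<le> d \<Longrightarrow> x i * y i (i+1) + x (i+2) * y (i+2) (i+1) = \<theta> * x (i+1)"
   and nz: "\<And>i. i+1 \<le> d \<Longrightarrow> y (i+1) i \<noteq> 0"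
   and x0: "x 0 = 0" and d: "1 \<le> d"
  shows "\<forall>i\<le>d. x i = 0"
proof -
  have *: "i+1 \<le> d \<longrightarrow> x i = 0 \<and> x (i+1) = 0" for i
  proof (induction i)
    case 0
    show ?case using c0 x0 nz[of 0] by auto
  next
    case (Suc i)
    show ?case
    proof
      assume h: "Suc i + 1 \<le> d"
      with Suc have a: "x i = 0" "x (i+1) = 0" by auto
      from cm[of i] h a have "x (i+2) * y (i+2) (i+1) = 0" by simp
      with nz[of "i+1"] h have "x (i+2) = 0" by auto
      thus "x (Suc i) = 0 \<and> x (Suc i + 1) = 0" using a by simp
    qed
  qed
  show ?thesis
  proof (intro allI impI)
    fix i assume "i \<le> d"
    show "x i = 0"
    proof (cases i)
      case 0 thus ?thesis using x0 by simp
    next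
      case (Suc j) thus ?thesis using *[of j] \<open>i \<le> d\<close> by simp
    qed
  qed
qed



lemma prim_facts:
  fixes A :: "'a::field mat"
  assumes prim: "primitive_idempotents d A th E" and A: "A \<in> carrier_mat (d+1) (d+1)"
  shows "\<forall>k\<le>d. \<forall>j\<le>d. E k * E j = (if k = j then E k else 0\<^sub>m (d+1) (d+1))"
    and "\<forall>j\<le>d. A * E j = th j \<cdot>\<^sub>m E j"
proof -
  define n where "n = d+1"
  define ind where "ind = (\<lambda>(k::nat) (i::nat). if i = k then (1::'a) else 0)"
  have A': "A \<in> carrier_mat n n" using A n_def by simp
  note mm = massoc[of _ n] mult_carrier_mat[of _ n n _ n]
  have eig: "\<forall>i\<le>d. eigenvalue A (th i)" and Ecar: "\<forall>i\<le>d. E i \<in> carrier_mat n n"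
    and Eact: "\<forall>i\<le>d. \<forall>j\<le>d. \<forall>v \<in> carrier_vec n. A *\<^sub>v v = th j \<cdot>\<^sub>v v \<longrightarrow>
            E i *\<^sub>v v = (if i = j then v else 0\<^sub>v n)"
    using prim unfolding primitive_idempotents_def n_def by auto
  have "\<forall>j. \<exists>v. j \<le> d \<longrightarrow> v \<in> carrier_vec n \<and> v \<noteq> 0\<^sub>v n \<and> A *\<^sub>v v = th j \<cdot>\<^sub>v v"
    using eig A' unfolding eigenvalue_def eigenvector_def by auto
  then obtain u where u: "\<And>j. j \<le> d \<Longrightarrow> u j \<in> carrier_vec n \<and> u j \<noteq> 0\<^sub>v n \<and> A *\<^sub>v u j = th j \<cdot>\<^sub>v u j"
    by metis
  define U where "U = mat n n (\<lambda>(i,j). u j $ i)"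
  have U: "U \<in> carrier_mat n n" unfolding U_def by simp
  have colU: "col U j = u j" if "j < n" for j
    using that u[of j] unfolding U_def n_def by (intro eq_vecI) auto
  have EU: "E k * U = U * dm n (ind k)" if k: "k \<le> d" for k
  proof (rule colwise[OF _ U])
    show "E k \<in> carrier_mat n n" using Ecar k by auto
    fix j assume j: "j < n"
    have "E k *\<^sub>v u j = (if k = j then u j else 0\<^sub>v n)"
      using Eact k j u[of j] unfolding n_def by auto
    thus "E k *\<^sub>v col U j = ind k j \<cdot>\<^sub>v col U j"
      using colU[OF j] u[of j] j unfolding ind_def n_def by auto
  qed
  have AU: "A * U = U * dm n th"
  proof (rule colwise[OF A' U])
    fix j assume j: "j < n"
    thus "A *\<^sub>v col U j = th j \<cdot>\<^sub>v col U j" using colU[OF j] u[of j] unfolding n_def by auto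
  qed
  have detU: "det U \<noteq> 0"
  proof
    assume "det U = 0"
    then obtain c where c: "c \<in> carrier_vec n" "c \<noteq> 0\<^sub>v n" "U *\<^sub>v c = 0\<^sub>v n"
      using det_0_iff_vec_prod_zero_field[OF U] by auto
    have "c $ k = 0" if k: "k < n" for k
    proof -
      have kd: "k \<le> d" using k n_def by simp
      have "E k *\<^sub>v (U *\<^sub>v c) = 0\<^sub>v n" unfolding c(3)
        by (rule eq_vecI) (use Ecar kd in \<open>auto simp: scalar_prod_def\<close>)
      also have "E k *\<^sub>v (U *\<^sub>v c) = (E k * U) *\<^sub>v c" using Ecar kd U c by auto
      also have "\<dots> = (U * dm n (ind k)) *\<^sub>v c" using EU[OF kd] by simp
      finally have z: "(U * dm n (ind k)) *\<^sub>v c = 0\<^sub>v n" .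
      have "u k $ i * c $ k = 0" if i: "i < n" for i
      proof -
        have "((U * dm n (ind k)) *\<^sub>v c) $ i = (\<Sum>j\<in>{0..<n}. (U * dm n (ind k)) $$ (i,j) * c $ j)"
          using i U c by (simp add: scalar_prod_def)
        also have "\<dots> = (\<Sum>j\<in>{0..<n}. (U $$ (i,j) * ind k j) * c $ j)"
          by (intro sum.cong refl) (use i U in \<open>simp del: index_mult_mat add: mult_dm_right_index\<close>)
        also have "\<dots> = (U $$ (i,k) * ind k k) * c $ k"
          by (rule sum_single) (use k in \<open>auto simp: ind_def\<close>)
        also have "U $$ (i,k) = u k $ i" using i k unfolding U_def by simp
        finally show ?thesis using z i unfolding ind_def by simp
      qed
      moreover from u[OF kd] obtain i where "i < n" "u k $ i \<noteq> 0"
        by (metis carrier_vecD eq_vecI index_zero_vec(1,2))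
      ultimately show ?thesis by auto
    qed
    hence "c = 0\<^sub>v n" using c(1) by (intro eq_vecI) auto
    with c(2) show False by simp
  qed
  from det_non_zero_imp_unit[OF U detU, of "()"]
  obtain Ui where Ui: "Ui \<in> carrier_mat n n" "Ui * U = 1\<^sub>m n" "U * Ui = 1\<^sub>m n"
    unfolding Units_def ring_mat_def by auto
  have Eform: "E k = U * dm n (ind k) * Ui" if k: "k \<le> d" for k
  proof -
    have Ek: "E k \<in> carrier_mat n n" using Ecar k by auto
    have "E k = E k * (U * Ui)" using Ui Ek by simp
    also have "\<dots> = (E k * U) * Ui" using Ek U Ui by (simp add: assoc_mult_mat)
    finally show ?thesis using EU[OF k] by simp
  qed
  have Aform: "A = U * dm n th * Ui"
  proof -
    have "A = A * (U * Ui)" using Ui A' by simp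
    also have "\<dots> = (A * U) * Ui" using A' U Ui by (simp add: assoc_mult_mat)
    finally show ?thesis using AU by simp
  qed
  have prod: "U * dm n f * Ui * (U * dm n g * Ui) = U * dm n (\<lambda>i. f i * g i) * Ui" for f g
  proof -
    have X1: "U * dm n f \<in> carrier_mat n n" using U by simp
    have a: "Ui * (U * dm n g * Ui) = dm n g * Ui" using U Ui by (simp add: mm cancel_r[OF U Ui(1) Ui(2)] mult_carrier_mat[of _ n n _ n])
    have "U * dm n f * Ui * (U * dm n g * Ui) = U * dm n f * (Ui * (U * dm n g * Ui))"
      using X1 U Ui by (simp add: mm)
    also have "\<dots> = U * dm n f * dm n g * Ui" unfolding a using X1 Ui by (simp add: mm)
    also have "\<dots> = U * (dm n f * dm n g) * Ui" using U by (simp add: mm)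
    finally show ?thesis by (simp add: dm_mult_dm)
  qed
  show "\<forall>k\<le>d. \<forall>j\<le>d. E k * E j = (if k = j then E k else 0\<^sub>m (d+1) (d+1))"
  proof (intro allI impI)
    fix k j assume k: "k \<le> d" and j: "j \<le> d"
    have "E k * E j = U * dm n (\<lambda>i. ind k i * ind j i) * Ui"
      unfolding Eform[OF k] Eform[OF j] prod ..
    also have "\<dots> = (if k = j then E k else 0\<^sub>m n n)"
    proof (cases "k = j")
      case True
      hence "(\<lambda>i. ind k i * ind j i) = ind k" unfolding ind_def by auto
      thus ?thesis using Eform[OF k] True by simp
    next
      case False
      hence "(\<lambda>i. ind k i * ind j i) = (\<lambda>i. 0)" unfolding ind_def by auto
      thus ?thesis using False U Ui by (simp add: dm_zero)
    qed
    finally show "E k * E j = (if k = j then E k else 0\<^sub>m (d+1) (d+1))" unfolding n_def .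
  qed
  show "\<forall>j\<le>d. A * E j = th j \<cdot>\<^sub>m E j"
  proof (intro allI impI)
    fix j assume j: "j \<le> d"
    have "A * E j = U * dm n (\<lambda>i. th i * ind j i) * Ui"
      unfolding Eform[OF j] by (subst Aform) (rule prod)
    also have "(\<lambda>i. th i * ind j i) = (\<lambda>i. th j * ind j i)" unfolding ind_def by auto
    also have "U * dm n (\<lambda>i. th j * ind j i) * Ui = th j \<cdot>\<^sub>m (U * dm n (ind j) * Ui)"
      unfolding dm_smult mult_smult_distrib[OF U dm_carrier]
      by (rule mult_smult_assoc_mat[OF _ Ui(1), of _ n]) (use U in simp)
    finally show "A * E j = th j \<cdot>\<^sub>m E j" using Eform[OF j] by simp
  qed
qed



lemma W_facts:
  fixes A S W B :: "'a::field mat"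
  assumes EE: "\<forall>k\<le>d. \<forall>j\<le>d. E k * E j = (if k = j then E k else 0\<^sub>m (d+1) (d+1))"
    and AE: "\<forall>j\<le>d. A * E j = th j \<cdot>\<^sub>m E j"
    and Ecar: "\<forall>i\<le>d. E i \<in> carrier_mat (d+1) (d+1)"
    and A: "A \<in> carrier_mat (d+1) (d+1)" and S: "S \<in> carrier_mat (d+1) (d+1)"
    and W: "W \<in> carrier_mat (d+1) (d+1)" "invertible_mat W"
           "\<forall>i\<le>d. col W i \<in> (\<lambda>v. E i *\<^sub>v v) ` carrier_vec (d+1)"
    and B: "B \<in> carrier_mat (d+1) (d+1)" "S * W = W * B"
  shows "\<forall>k\<le>d. \<forall>j\<le>d. E k * S * E j = 0\<^sub>m (d+1) (d+1) \<longrightarrow> B $$ (k,j) = 0"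
    and "\<forall>i\<le>d. mtrace (E i * S) = B $$ (i,i)"
    and "\<forall>k\<le>d. \<forall>j\<le>d. k \<noteq> j \<longrightarrow> E k \<noteq> E j"
    and "\<exists>Wi. Wi \<in> carrier_mat (d+1) (d+1) \<and> Wi * W = 1\<^sub>m (d+1) \<and> W * Wi = 1\<^sub>m (d+1)
            \<and> Wi * A = dm (d+1) th * Wi \<and> Wi * S = B * Wi"
proof -
  define n where "n = d+1"
  define ind where "ind = (\<lambda>(k::nat) (i::nat). if i = k then (1::'a) else 0)"
  note mm = massoc[of _ n] mult_carrier_mat[of _ n n _ n]
  have A': "A \<in> carrier_mat n n" and S': "S \<in> carrier_mat n n" and W': "W \<in> carrier_mat n n"
    and B': "B \<in> carrier_mat n n" and Ec: "\<And>i. i \<le> d \<Longrightarrow> E i \<in> carrier_mat n n"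
    using A S W B Ecar n_def by auto
  have "\<forall>j. \<exists>v. j \<le> d \<longrightarrow> v \<in> carrier_vec n \<and> col W j = E j *\<^sub>v v"
    using W(3) unfolding n_def by blast
  then obtain wv where wv: "\<And>j. j \<le> d \<Longrightarrow> wv j \<in> carrier_vec n \<and> col W j = E j *\<^sub>v wv j"
    by metis
  have EW: "E k * W = W * dm n (ind k)" if k: "k \<le> d" for k
  proof (rule colwise[OF Ec[OF k] W'])
    fix j assume j: "j < n"
    hence jd: "j \<le> d" using n_def by simp
    have "E k *\<^sub>v col W j = (E k * E j) *\<^sub>v wv j" using wv[OF jd] by (simp add: assoc_mult_mat_vec[OF Ec[OF k] Ec[OF jd]])
    also have "\<dots> = ind k j \<cdot>\<^sub>v col W j"
    proof (cases "k = j")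
      case True thus ?thesis using EE wv[OF jd] jd unfolding ind_def by auto
    next
      case False
      hence "(E k * E j) *\<^sub>v wv j = 0\<^sub>v n" using EE k jd wv[OF jd] unfolding n_def
        by (auto intro!: eq_vecI simp: scalar_prod_def)
      thus ?thesis using False wv[OF jd] Ec[OF jd] unfolding ind_def by auto
    qed
    finally show "E k *\<^sub>v col W j = ind k j \<cdot>\<^sub>v col W j" .
  qed
  have AW: "A * W = W * dm n th"
  proof (rule colwise[OF A' W'])
    fix j assume j: "j < n"
    hence jd: "j \<le> d" using n_def by simp
    have "A *\<^sub>v col W j = (A * E j) *\<^sub>v wv j" using wv[OF jd] by (simp add: assoc_mult_mat_vec[OF A' Ec[OF jd]])
    also have "\<dots> = th j \<cdot>\<^sub>v col W j" using AE jd wv[OF jd] Ec[OF jd] smult_mat_vec[OF Ec[OF jd]] by simp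
    finally show "A *\<^sub>v col W j = th j \<cdot>\<^sub>v col W j" .
  qed
  from W(2) W' obtain Wi where Wi0: "W * Wi = 1\<^sub>m n" "Wi * W = 1\<^sub>m (dim_row Wi)"
    unfolding invertible_mat_def inverts_mat_def by auto
  have Wi: "Wi \<in> carrier_mat n n" using Wi0 W'
    by (metis carrier_matD carrier_matI index_mult_mat(2,3) index_one_mat(2,3))
  have Wi1: "Wi * W = 1\<^sub>m n" using Wi0 Wi by simp
  note cW = cancel_r[OF W' Wi Wi1] cancel_r[OF Wi W' Wi0(1)]
  have conjg: "Wi * (M * W) = N" if "M * W = W * N" "M \<in> carrier_mat n n" "N \<in> carrier_mat n n" for M N
    using that W' Wi by (simp add: cW)
  have WiA: "Wi * A = dm n th * Wi"
  proof -
    have "Wi * A = Wi * (A * (W * Wi))" using Wi0 A' by simp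
    also have "\<dots> = (Wi * (A * W)) * Wi" using A' W' Wi by (simp add: mm)
    also have "Wi * (A * W) = dm n th" using conjg[OF AW] A' by simp
    finally show ?thesis .
  qed
  have WiS: "Wi * S = B * Wi"
  proof -
    have "Wi * S = Wi * (S * (W * Wi))" using Wi0 S' by simp
    also have "\<dots> = (Wi * (S * W)) * Wi" using S' W' Wi by (simp add: mm)
    also have "Wi * (S * W) = B" using conjg[OF B(2)] S' B' by simp
    finally show ?thesis .
  qed
  have key: "Wi * (E k * S * E j * W) = dm n (ind k) * B * dm n (ind j)" if k: "k \<le> d" and j: "j \<le> d" for k j
  proof -
    have WiE: "Wi * E k = dm n (ind k) * Wi"
    proof -
      have "Wi * E k = Wi * (E k * (W * Wi))" using Wi0 Ec[OF k] by simp
      also have "\<dots> = (Wi * (E k * W)) * Wi" using Ec[OF k] W' Wi by (simp add: mm)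
      also have "Wi * (E k * W) = dm n (ind k)" using conjg[OF EW[OF k]] Ec[OF k] by simp
      finally show ?thesis .
    qed
    have "Wi * (E k * S * E j * W) = (Wi * E k) * S * (E j * W)" using Ec k j S' W' Wi by (simp add: mm)
    also have "\<dots> = dm n (ind k) * (Wi * S) * W * dm n (ind j)" unfolding WiE EW[OF j]
      using Ec k j S' W' Wi by (simp add: mm)
    also have "\<dots> = dm n (ind k) * B * (Wi * W) * dm n (ind j)" unfolding WiS
      using Ec k j S' W' Wi B' by (simp add: mm)
    finally show ?thesis using Wi1 B' by (simp add: mm)
  qed
  show "\<forall>k\<le>d. \<forall>j\<le>d. E k * S * E j = 0\<^sub>m (d+1) (d+1) \<longrightarrow> B $$ (k,j) = 0"
  proof (intro allI impI)
    fix k j assume k: "k \<le> d" and j: "j \<le> d" and z: "E k * S * E j = 0\<^sub>m (d+1) (d+1)"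
    have "dm n (ind k) * B * dm n (ind j) = 0\<^sub>m n n"
      using key[OF k j] z W' Wi unfolding n_def by simp
    hence "(dm n (ind k) * B * dm n (ind j)) $$ (k,j) = 0" using k j n_def by simp
    moreover have "(dm n (ind k) * B * dm n (ind j)) $$ (k,j) = B $$ (k,j)"
    proof -
      have kn: "k < n" "j < n" using k j n_def by auto
      have "(dm n (ind k) * B * dm n (ind j)) $$ (k,j) = (dm n (ind k) * B) $$ (k,j) * ind j j"
        by (rule mult_dm_right_index[OF _ kn]) (use B' in \<open>simp add: mm\<close>)
      also have "(dm n (ind k) * B) $$ (k,j) = ind k k * B $$ (k,j)"
        by (rule mult_dm_left_index[OF B' kn])
      finally show ?thesis unfolding ind_def by simp
    qed
    ultimately show "B $$ (k,j) = 0" by simp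
  qed
  show "\<forall>i\<le>d. mtrace (E i * S) = B $$ (i,i)"
  proof (intro allI impI)
    fix i assume i: "i \<le> d"
    have WiE: "Wi * E i = dm n (ind i) * Wi"
    proof -
      have "Wi * E i = Wi * (E i * (W * Wi))" using Wi0 Ec[OF i] by simp
      also have "\<dots> = (Wi * (E i * W)) * Wi" using Ec[OF i] W' Wi by (simp add: mm)
      also have "Wi * (E i * W) = dm n (ind i)" using conjg[OF EW[OF i]] Ec[OF i] by simp
      finally show ?thesis .
    qed
    have WiEX: "Wi * (E i * X) = dm n (ind i) * (Wi * X)" if X: "X \<in> carrier_mat n n" for X
    proof -
      have "Wi * (E i * X) = (Wi * E i) * X" by (rule massoc[symmetric]) (use Wi Ec[OF i] X in auto)
      also have "\<dots> = dm n (ind i) * (Wi * X)" unfolding WiE by (rule massoc) (use Wi X in auto)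
      finally show ?thesis .
    qed
    have "mtrace (E i * S) = mtrace (Wi * (E i * S) * W)"
      using mtrace_conj[of "E i * S" n W Wi] Ec[OF i] S' W' Wi Wi0 by simp
    also have "Wi * (E i * S) * W = dm n (ind i) * (Wi * S) * W"
      using Ec[OF i] S' W' Wi by (simp add: mm WiEX)
    also have "\<dots> = dm n (ind i) * B"
      unfolding WiS using B' W' Wi Wi1 by (simp add: mm cW)
    also have "mtrace \<dots> = B $$ (i,i)" unfolding ind_def using mtrace_dm[OF B', of i] i n_def by simp
    finally show "mtrace (E i * S) = B $$ (i,i)" .
  qed
  show "\<forall>k\<le>d. \<forall>j\<le>d. k \<noteq> j \<longrightarrow> E k \<noteq> E j"
  proof (intro allI impI)
    fix k j assume k: "k \<le> d" and j: "j \<le> d" and kj: "k \<noteq> j"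
    show "E k \<noteq> E j"
    proof
      assume "E k = E j"
      hence "Wi * (E k * W) = Wi * (E j * W)" by simp
      hence "dm n (ind k) = dm n (ind j)" using conjg[OF EW[OF k]] conjg[OF EW[OF j]] Ec k j by simp
      hence "dm n (ind k) $$ (k,k) = dm n (ind j) $$ (k,k)" by simp
      thus False using k kj n_def unfolding ind_def by simp
    qed
  qed
  show "\<exists>Wi. Wi \<in> carrier_mat (d+1) (d+1) \<and> Wi * W = 1\<^sub>m (d+1) \<and> W * Wi = 1\<^sub>m (d+1)
            \<and> Wi * A = dm (d+1) th * Wi \<and> Wi * S = B * Wi"
    using Wi Wi1 Wi0 WiA WiS n_def by auto
qed



lemma P_facts:
  fixes A P Y :: "'a::field mat"
  assumes Es: "orth_idem_system d Es"
    and A: "A \<in> carrier_mat (d+1) (d+1)"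
    and tri0: "\<forall>i\<le>d. \<forall>j\<le>d. nat \<bar>int i - int j\<bar> > 1 \<longrightarrow> Es i * A * Es j = 0\<^sub>m (d+1) (d+1)"
    and tri1: "\<forall>i\<le>d. \<forall>j\<le>d. nat \<bar>int i - int j\<bar> = 1 \<longrightarrow> Es i * A * Es j \<noteq> 0\<^sub>m (d+1) (d+1)"
    and bip: "bipartite d Es A"
    and P: "P \<in> carrier_mat (d+1) (d+1)" "Y \<in> carrier_mat (d+1) (d+1)" "invertible_mat P"
        "\<forall>i\<le>d. col P i \<in> (\<lambda>v. Es i *\<^sub>v v) ` carrier_vec (d+1)" "A * P = P * Y"
  shows "\<exists>Pi. Pi \<in> carrier_mat (d+1) (d+1) \<and> Pi * P = 1\<^sub>m (d+1) \<and> P * Pi = 1\<^sub>m (d+1)"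
    and "\<forall>k\<le>d. \<forall>j\<le>d. nat \<bar>int k - int j\<bar> \<noteq> 1 \<longrightarrow> Y $$ (k,j) = 0"
    and "\<forall>k\<le>d. \<forall>j\<le>d. nat \<bar>int k - int j\<bar> = 1 \<longrightarrow> Y $$ (k,j) \<noteq> 0"
    and "mat (d+1) (d+1) (\<lambda>(r, c). \<Sum>i\<le>d. ths i * Es i $$ (r, c)) * P = P * dm (d+1) ths"
proof -
  define n where "n = d+1"
  define ind where "ind = (\<lambda>(k::nat) (i::nat). if i = k then (1::'a) else 0)"
  note mm = massoc[of _ n] mult_carrier_mat[of _ n n _ n]
  have A': "A \<in> carrier_mat n n" and P': "P \<in> carrier_mat n n" and Y': "Y \<in> carrier_mat n n"
    using A P n_def by auto
  have Ec: "\<And>i. i \<le> d \<Longrightarrow> Es i \<in> carrier_mat n n"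
    and EE: "\<forall>i\<le>d. \<forall>j\<le>d. Es i * Es j = (if i = j then Es i else 0\<^sub>m n n)"
    using Es unfolding orth_idem_system_def n_def by auto
  have "\<forall>j. \<exists>v. j \<le> d \<longrightarrow> v \<in> carrier_vec n \<and> col P j = Es j *\<^sub>v v"
    using P(4) unfolding n_def by blast
  then obtain pv where pv: "\<And>j. j \<le> d \<Longrightarrow> pv j \<in> carrier_vec n \<and> col P j = Es j *\<^sub>v pv j"
    by metis
  have EP: "Es k * P = P * dm n (ind k)" if k: "k \<le> d" for k
  proof (rule colwise[OF Ec[OF k] P'])
    fix j assume j: "j < n"
    hence jd: "j \<le> d" using n_def by simp
    have "Es k *\<^sub>v col P j = (Es k * Es j) *\<^sub>v pv j"
      using pv[OF jd] by (simp add: assoc_mult_mat_vec[OF Ec[OF k] Ec[OF jd]])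
    also have "\<dots> = ind k j \<cdot>\<^sub>v col P j"
    proof (cases "k = j")
      case True thus ?thesis using EE pv[OF jd] jd unfolding ind_def by auto
    next
      case False
      hence "(Es k * Es j) *\<^sub>v pv j = 0\<^sub>v n" using EE k jd pv[OF jd]
        by (auto intro!: eq_vecI simp: scalar_prod_def)
      thus ?thesis using False pv[OF jd] Ec[OF jd] unfolding ind_def by auto
    qed
    finally show "Es k *\<^sub>v col P j = ind k j \<cdot>\<^sub>v col P j" .
  qed
  from P(3) P' obtain Pi where Pi0: "P * Pi = 1\<^sub>m n" "Pi * P = 1\<^sub>m (dim_row Pi)"
    unfolding invertible_mat_def inverts_mat_def by auto
  have Pi: "Pi \<in> carrier_mat n n" using Pi0 P'
    by (metis carrier_matD carrier_matI index_mult_mat(2,3) index_one_mat(2,3))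
  have Pi1: "Pi * P = 1\<^sub>m n" using Pi0 Pi by simp
  note cP = cancel_r[OF P' Pi Pi1] cancel_r[OF Pi P' Pi0(1)]
  show "\<exists>Pi. Pi \<in> carrier_mat (d+1) (d+1) \<and> Pi * P = 1\<^sub>m (d+1) \<and> P * Pi = 1\<^sub>m (d+1)"
    using Pi Pi1 Pi0 n_def by auto
  have Yf: "Pi * (A * P) = Y" using P(5) Y' by (simp add: cP)
  have PiE: "Pi * (Es k * X) = dm n (ind k) * (Pi * X)" if k: "k \<le> d" and X: "X \<in> carrier_mat n n" for k X
  proof -
    have PiE0: "Pi * Es k = dm n (ind k) * Pi"
    proof -
      have "Pi * Es k = Pi * (Es k * (P * Pi))" using Pi0 Ec[OF k] by simp
      also have "\<dots> = (Pi * (Es k * P)) * Pi" using Ec[OF k] P' Pi by (simp add: mm)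
      also have "Pi * (Es k * P) = dm n (ind k)" unfolding EP[OF k] by (simp add: cP)
      finally show ?thesis .
    qed
    have "Pi * (Es k * X) = (Pi * Es k) * X" by (rule massoc[symmetric]) (use Pi Ec[OF k] X in auto)
    also have "\<dots> = dm n (ind k) * (Pi * X)" unfolding PiE0 by (rule massoc) (use Pi X in auto)
    finally show ?thesis .
  qed
  have key: "Pi * (Es k * A * Es j * P) = dm n (ind k) * Y * dm n (ind j)" if k: "k \<le> d" and j: "j \<le> d" for k j
  proof -
    have "Es k * A * Es j * P = Es k * (A * (Es j * P))" using Ec k j A' P' by (simp add: mm)
    also have "\<dots> = Es k * (A * P * dm n (ind j))" unfolding EP[OF j] using A' P' by (simp add: mm)
    finally have "Pi * (Es k * A * Es j * P) = dm n (ind k) * (Pi * (A * P * dm n (ind j)))"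
      using PiE[OF k] A' P' by (simp add: mm)
    also have "Pi * (A * P * dm n (ind j)) = Pi * (A * P) * dm n (ind j)"
      by (rule massoc[of _ n, symmetric]) (use A' P' Pi in \<open>simp_all add: mm\<close>)
    also have "\<dots> = Y * dm n (ind j)" unfolding Yf ..
    finally show ?thesis using Y' by (simp add: mm)
  qed
  have entry: "(dm n (ind k) * Y * dm n (ind j)) $$ (r,c) = ind k r * Y $$ (r,c) * ind j c"
    if "r < n" "c < n" for k j r c
  proof -
    have "(dm n (ind k) * Y * dm n (ind j)) $$ (r,c) = (dm n (ind k) * Y) $$ (r,c) * ind j c"
      by (rule mult_dm_right_index[OF _ that]) (use Y' in \<open>simp add: mm\<close>)
    also have "(dm n (ind k) * Y) $$ (r,c) = ind k r * Y $$ (r,c)"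
      by (rule mult_dm_left_index[OF Y' that])
    finally show ?thesis .
  qed
  have zero_iff: "Es k * A * Es j = 0\<^sub>m n n \<longleftrightarrow> Y $$ (k,j) = 0" if k: "k \<le> d" and j: "j \<le> d" for k j
  proof
    assume z: "Es k * A * Es j = 0\<^sub>m n n"
    have "dm n (ind k) * Y * dm n (ind j) = 0\<^sub>m n n" using key[OF k j] z P' Pi by simp
    hence "(dm n (ind k) * Y * dm n (ind j)) $$ (k,j) = 0" using k j n_def by simp
    thus "Y $$ (k,j) = 0" using entry[of k j k j] k j n_def unfolding ind_def by simp
  next
    assume y: "Y $$ (k,j) = 0"
    have z: "dm n (ind k) * Y * dm n (ind j) = 0\<^sub>m n n"
      by (rule eq_matI) (use entry y Y' in \<open>auto simp: ind_def\<close>)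
    have M: "Es k * A * Es j \<in> carrier_mat n n" using Ec k j A' by (simp add: mm)
    have "Es k * A * Es j * P = P * (Pi * (Es k * A * Es j * P))" using M P' by (simp add: cP mm)
    also have "\<dots> = 0\<^sub>m n n" unfolding key[OF k j] z using P' by simp
    finally have "Es k * A * Es j * P * Pi = 0\<^sub>m n n * Pi" by simp
    hence "Es k * A * Es j * (P * Pi) = 0\<^sub>m n n" using M P' Pi by (simp add: mm)
    thus "Es k * A * Es j = 0\<^sub>m n n" using M Pi0(1) by (simp add: right_mult_one_mat[OF M])
  qed
  show "\<forall>k\<le>d. \<forall>j\<le>d. nat \<bar>int k - int j\<bar> = 1 \<longrightarrow> Y $$ (k,j) \<noteq> 0"
    using tri1 zero_iff unfolding n_def by blast
  show "\<forall>k\<le>d. \<forall>j\<le>d. nat \<bar>int k - int j\<bar> \<noteq> 1 \<longrightarrow> Y $$ (k,j) = 0"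
  proof (intro allI impI)
    fix k j assume k: "k \<le> d" and j: "j \<le> d" and kj: "nat \<bar>int k - int j\<bar> \<noteq> 1"
    show "Y $$ (k,j) = 0"
    proof (cases "k = j")
      case False
      hence "nat \<bar>int k - int j\<bar> > 1" using kj by auto
      thus ?thesis using tri0 zero_iff k j unfolding n_def by blast
    next
      case True
      have "mtrace (Es k * A) = 0" using bip k unfolding bipartite_def by auto
      moreover have "mtrace (Es k * A) = mtrace (Pi * (Es k * A) * P)"
        using mtrace_conj[of "Es k * A" n P Pi] Ec[OF k] A' P' Pi Pi0 by (simp add: mm)
      moreover have "Pi * (Es k * A) * P = dm n (ind k) * Y"
        using PiE[OF k] Yf Ec[OF k] A' P' Pi by (simp add: mm)
      moreover have "mtrace (dm n (ind k) * Y) = Y $$ (k,k)"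
        unfolding ind_def using mtrace_dm[OF Y', of k] k n_def by simp
      ultimately show ?thesis using True by simp
    qed
  qed
  show "mat (d+1) (d+1) (\<lambda>(r, c). \<Sum>i\<le>d. ths i * Es i $$ (r, c)) * P = P * dm (d+1) ths"
  proof (rule eq_matI)
    fix r j assume r: "r < dim_row (P * dm (d+1) ths)" and j: "j < dim_col (P * dm (d+1) ths)"
    hence r': "r < n" and j': "j < n" using P' n_def by auto
    have "(mat (d+1) (d+1) (\<lambda>(r, c). \<Sum>i\<le>d. ths i * Es i $$ (r, c)) * P) $$ (r,j)
        = (\<Sum>c\<in>{0..<n}. (\<Sum>i\<le>d. ths i * Es i $$ (r, c)) * P $$ (c,j))"
      using r' j' P' unfolding n_def by (simp add: scalar_prod_def)
    also have "\<dots> = (\<Sum>i\<le>d. ths i * (\<Sum>c\<in>{0..<n}. Es i $$ (r, c) * P $$ (c,j)))"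
      by (simp add: sum_distrib_left sum_distrib_right mult.assoc sum.swap[of _ "{0..<n}"])
    also have "\<dots> = (\<Sum>i\<le>d. ths i * (Es i * P) $$ (r,j))"
    proof (intro sum.cong refl)
      fix i assume "i \<in> {..d}"
      hence "Es i \<in> carrier_mat n n" using Ec by simp
      thus "ths i * (\<Sum>c\<in>{0..<n}. Es i $$ (r, c) * P $$ (c,j)) = ths i * (Es i * P) $$ (r,j)"
        using r' j' P' by (simp add: scalar_prod_def)
    qed
    also have "\<dots> = (\<Sum>i\<le>d. ths i * (P $$ (r,j) * ind i j))"
      using r' j' P' by (intro sum.cong refl) (simp del: index_mult_mat add: EP mult_dm_right_index[OF P'])
    also have "\<dots> = ths j * (P $$ (r,j) * ind j j)"
      by (rule sum_single) (use j' n_def in \<open>auto simp: ind_def\<close>)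
    also have "\<dots> = (P * dm (d+1) ths) $$ (r,j)"
      using mult_dm_right_index[OF P' r' j'] n_def by (simp add: ind_def)
    finally show "(mat (d+1) (d+1) (\<lambda>(r, c). \<Sum>i\<le>d. ths i * Es i $$ (r, c)) * P) $$ (r,j) = (P * dm (d+1) ths) $$ (r,j)" .
  qed (use P' n_def in auto)
qed



lemma lev1:
  fixes x00 x01 x10 x11 y t0 t1 T0 T1 a0 b01 :: "'a::field"
  assumes c0: "x01*y = t0*x00" and c1: "x11*y = t1*x10"
    and r00: "x00*T0 = a0*x00 + b01*x10" and r01: "x01*T1 = a0*x01 + b01*x11"
  shows "x00*(t0*(T1-a0) - t1*(T0-a0)) = 0"
proof -
  have "x00*(t0*(T1-a0) - t1*(T0-a0)) = (T1-a0)*(t0*x00 - x01*y) + y*(x01*T1 - a0*x01 - b01*x11)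
     + b01*(x11*y - t1*x10) + t1*(b01*x10 + a0*x00 - x00*T0)"
    by (simp add: algebra_simps)
  also have "\<dots> = 0" using assms by simp
  finally show ?thesis .
qed

lemma lev2:
  fixes x00 x01 x10 x11 x20 x21 y t0 t2 T0 T1 a0 a1 b01 b10 b12 :: "'a::field"
  assumes c0: "x01*y = t0*x00" and c2: "x21*y = t2*x20"
    and r00: "x00*T0 = a0*x00 + b01*x10" and r01: "x01*T1 = a0*x01 + b01*x11"
    and r10: "x10*T0 = b10*x00 + a1*x10 + b12*x20" and r11: "x11*T1 = b10*x01 + a1*x11 + b12*x21"
  shows "x00*(t0*((T1-a0)*(T1-a1) - b01*b10) - t2*((T0-a0)*(T0-a1) - b01*b10)) = 0"
proof -
  have q: "b01*b12*x2i - ((Ti-a0)*(Ti-a1) - b01*b10)*x0i = 0"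
    if r0: "x0i*Ti = a0*x0i + b01*x1i" and r1: "x1i*Ti = b10*x0i + a1*x1i + b12*x2i"
    for x0i x1i x2i Ti
  proof -
    have "b01*b12*x2i - ((Ti-a0)*(Ti-a1) - b01*b10)*x0i
       = - b01*(x1i*Ti - b10*x0i - a1*x1i - b12*x2i) + (Ti-a1)*(b01*x1i + a0*x0i - x0i*Ti)"
      by (simp add: algebra_simps)
    also have "\<dots> = 0" using r0 r1 by simp
    finally show ?thesis .
  qed
  have q0: "b01*b12*x20 - ((T0-a0)*(T0-a1) - b01*b10)*x00 = 0" by (rule q[OF r00 r10])
  have q1: "b01*b12*x21 - ((T1-a0)*(T1-a1) - b01*b10)*x01 = 0" by (rule q[OF r01 r11])
  have "x00*(t0*((T1-a0)*(T1-a1) - b01*b10) - t2*((T0-a0)*(T0-a1) - b01*b10))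
     = ((T1-a0)*(T1-a1) - b01*b10)*(t0*x00 - x01*y)
       - y*(b01*b12*x21 - ((T1-a0)*(T1-a1) - b01*b10)*x01)
       + b01*b12*(x21*y - t2*x20)
       + t2*(b01*b12*x20 - ((T0-a0)*(T0-a1) - b01*b10)*x00)"
    by (simp add: algebra_simps)
  also have "\<dots> = 0" using c0 c2 q0 q1 by simp
  finally show ?thesis .
qed

lemma sum_two:
  assumes "finite S" "a \<in> S" "b \<in> S" "a \<noteq> b" "\<And>k. k \<in> S \<Longrightarrow> k \<noteq> a \<Longrightarrow> k \<noteq> b \<Longrightarrow> f k = 0"
  shows "sum f S = f a + f b"
proof -
  have "sum f S = f a + sum f (S - {a})" using assms by (simp add: sum.remove)
  also have "sum f (S - {a}) = f b" using assms by (intro sum_single) auto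
  finally show ?thesis .
qed

lemma sum_three:
  assumes "finite S" "a \<in> S" "b \<in> S" "c \<in> S" "a \<noteq> b" "a \<noteq> c" "b \<noteq> c"
    "\<And>k. k \<in> S \<Longrightarrow> k \<noteq> a \<Longrightarrow> k \<noteq> b \<Longrightarrow> k \<noteq> c \<Longrightarrow> f k = 0"
  shows "sum f S = f a + f b + f c"
proof -
  have "sum f S = f a + sum f (S - {a})" using assms by (simp add: sum.remove)
  also have "sum f (S - {a}) = f b + f c" using assms by (intro sum_two) auto
  finally show ?thesis by (simp add: add.assoc)
qed



theorem lemma8p3:
  fixes d :: nat
    and Es E :: "nat \<Rightarrow> 'a::field mat"
    and A :: "'a mat"
    and th ths :: "nat \<Rightarrow> 'a"
  assumes d3: "d \<ge> 3"
    and Es: "orth_idem_system d Es"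
    and A: "A \<in> carrier_mat (d+1) (d+1)"
    and tri0: "\<forall>i\<le>d. \<forall>j\<le>d. nat \<bar>int i - int j\<bar> > 1 \<longrightarrow> Es i * A * Es j = 0\<^sub>m (d+1) (d+1)"
    and tri1: "\<forall>i\<le>d. \<forall>j\<le>d. nat \<bar>int i - int j\<bar> = 1 \<longrightarrow> Es i * A * Es j \<noteq> 0\<^sub>m (d+1) (d+1)"
    and prim: "primitive_idempotents d A th E"
    and bip: "bipartite d Es A"
    and ths_dist: "\<forall>i\<le>d. \<forall>j\<le>d. i \<noteq> j \<longrightarrow> ths i \<noteq> ths j"
    and norm: "normalizing d Es A (th 0)"
    and tail: "is_tail d E (mat (d+1) (d+1) (\<lambda>(r, c). \<Sum>i\<le>d. ths i * Es i $$ (r, c)))"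
    and adj12: "Delta_adj d E (mat (d+1) (d+1) (\<lambda>(r, c). \<Sum>i\<le>d. ths i * Es i $$ (r, c))) 1 2"
    and W: "W \<in> carrier_mat (d+1) (d+1)" "invertible_mat W"
           "\<forall>i\<le>d. col W i \<in> (\<lambda>v. E i *\<^sub>v v) ` carrier_vec (d+1)"
    and B: "B \<in> carrier_mat (d+1) (d+1)"
           "mat (d+1) (d+1) (\<lambda>(r, c). \<Sum>i\<le>d. ths i * Es i $$ (r, c)) * W = W * B"
  shows "let As = mat (d+1) (d+1) (\<lambda>(r, c). \<Sum>i\<le>d. ths i * Es i $$ (r, c));
             as = (\<lambda>i. mtrace (E i * As));
             bc = B $$ (0, 1) * B $$ (1, 0);
             psi = ths 1 + ths 0 - as 1 - as 0;
             zeta = as 0 * as 1 - bc - ths 0 * ths 1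
         in psi = (th 1 * (ths (d-1) - ths 0) - th 2 * (ths d - ths 1)) / (th 2 - th 1)
          \<and> zeta = (th 2 * ths 0 - th 0 * ths 1) / (th 2 - th 0)
                 * ((th 2 * (ths d - ths 1) - th 1 * (ths (d-1) - ths 0)) / (th 2 - th 1))"
proof -
  define n where "n = d+1"
  define As where "As = mat (d+1) (d+1) (\<lambda>(r, c). \<Sum>i\<le>d. ths i * Es i $$ (r, c))"
  note mm = massoc[of _ n] mult_carrier_mat[of _ n n _ n]
  have As: "As \<in> carrier_mat (d+1) (d+1)" unfolding As_def by simp
  have Ecar: "\<forall>i\<le>d. E i \<in> carrier_mat (d+1) (d+1)" and thd: "\<forall>i\<le>d. \<forall>j\<le>d. i \<noteq> j \<longrightarrow> th i \<noteq> th j"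
    using prim unfolding primitive_idempotents_def by auto
  note pf = prim_facts[OF prim A]
  note wf = W_facts[OF pf(1) pf(2) Ecar A As W B(1) B(2)[folded As_def]]
  obtain Wi where Wi: "Wi \<in> carrier_mat n n" "Wi * W = 1\<^sub>m n" "W * Wi = 1\<^sub>m n"
      "Wi * A = dm n th * Wi" "Wi * As = B * Wi"
    using wf(4) n_def by auto
  obtain P Y where PY: "P \<in> carrier_mat (d+1) (d+1)" "Y \<in> carrier_mat (d+1) (d+1)" "invertible_mat P"
      "\<forall>i\<le>d. col P i \<in> (\<lambda>v. Es i *\<^sub>v v) ` carrier_vec (d+1)" "A * P = P * Y"
    using norm unfolding normalizing_def by auto
  note pf2 = P_facts[OF Es A tri0 tri1 bip PY]
  note AsP = P_facts(4)[OF Es A tri0 tri1 bip PY, of ths, folded As_def]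
  obtain Pi where Pi: "Pi \<in> carrier_mat n n" "Pi * P = 1\<^sub>m n" "P * Pi = 1\<^sub>m n"
    using pf2(1) n_def by auto
  have P': "P \<in> carrier_mat n n" and Y': "Y \<in> carrier_mat n n" and W': "W \<in> carrier_mat n n"
    and A': "A \<in> carrier_mat n n" and As': "As \<in> carrier_mat n n" and B': "B \<in> carrier_mat n n"
    using PY W B A As n_def by auto
  define X where "X = Wi * P"
  have X: "X \<in> carrier_mat n n" unfolding X_def using Wi P' by simp
  have XY: "X * Y = dm n th * X"
  proof -
    have "X * Y = Wi * (P * Y)" unfolding X_def by (rule massoc) (use Wi P' Y' in auto)
    also have "\<dots> = (Wi * A) * P" unfolding PY(5)[symmetric] by (rule massoc[symmetric]) (use Wi P' A' in auto)
    also have "\<dots> = dm n th * X" unfolding Wi(4) X_def by (rule massoc) (use Wi P' in auto)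
    finally show ?thesis .
  qed
  have XT: "X * dm n ths = B * X"
  proof -
    have "X * dm n ths = Wi * (P * dm n ths)" unfolding X_def by (rule massoc) (use Wi P' in auto)
    also have "\<dots> = (Wi * As) * P" unfolding AsP[folded n_def, symmetric] by (rule massoc[symmetric]) (use Wi P' As' in auto)
    also have "\<dots> = B * X" unfolding Wi(5) X_def by (rule massoc) (use Wi P' B' in auto)
    finally show ?thesis .
  qed
  have Xinv: "X * (Pi * W) = 1\<^sub>m n"
  proof -
    have "X * (Pi * W) = Wi * (P * (Pi * W))" unfolding X_def by (rule massoc) (use Wi P' Pi W' in auto)
    also have "P * (Pi * W) = W" by (rule cancel_r[OF Pi(1) P' Pi(3) W'])
    finally show ?thesis using Wi by simp
  qed
  have XYe: "(\<Sum>k\<in>{0..<n}. X $$ (j,k) * Y $$ (k,i)) = th j * X $$ (j,i)" if "j < n" "i < n" for j i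
  proof -
    have "(X * Y) $$ (j,i) = (dm n th * X) $$ (j,i)" using XY by simp
    also have "\<dots> = th j * X $$ (j,i)" by (rule mult_dm_left_index[OF X that])
    also have "(X * Y) $$ (j,i) = (\<Sum>k\<in>{0..<n}. X $$ (j,k) * Y $$ (k,i))"
      using that X Y' by (simp add: scalar_prod_def)
    finally show ?thesis .
  qed
  have XTe: "X $$ (j,i) * ths i = (\<Sum>k\<in>{0..<n}. B $$ (j,k) * X $$ (k,i))" if "j < n" "i < n" for j i
  proof -
    have "(B * X) $$ (j,i) = (X * dm n ths) $$ (j,i)" using XT by simp
    also have "\<dots> = X $$ (j,i) * ths i" by (rule mult_dm_right_index[OF X that])
    also have "(B * X) $$ (j,i) = (\<Sum>k\<in>{0..<n}. B $$ (j,k) * X $$ (k,i))"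
      using that X B' by (simp add: scalar_prod_def)
    finally show ?thesis by simp
  qed
  have row0: "\<exists>i<n. X $$ (0,i) \<noteq> 0"
  proof (rule ccontr)
    assume "\<not> ?thesis"
    hence z: "\<And>i. i < n \<Longrightarrow> X $$ (0,i) = 0" by auto
    have "(X * (Pi * W)) $$ (0,0) = (\<Sum>k\<in>{0..<n}. X $$ (0,k) * (Pi * W) $$ (k,0))"
      using X Pi W' n_def by (simp add: scalar_prod_def del: index_mult_mat add: index_mult_mat(1,2,3))
    also have "\<dots> = 0" using z by simp
    finally show False using Xinv n_def by simp
  qed
  have Bd: "\<And>k j. k \<le> d \<Longrightarrow> j \<le> d \<Longrightarrow> k \<noteq> j \<Longrightarrow> E k \<noteq> E j" using wf(3) by blast
  have B0: "B $$ (0,k) = 0" if k: "2 \<le> k" "k \<le> d" for k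
  proof -
    have "\<not> Delta_adj d E As 0 k"
    proof
      assume "Delta_adj d E As 0 k"
      hence "E k = E 1" using tail k unfolding is_tail_def As_def by auto
      thus False using Bd[of k 1] k d3 by auto
    qed
    hence "E 0 * As * E k = 0\<^sub>m (d+1) (d+1)" using Bd[of 0 k] k unfolding Delta_adj_def by auto
    thus ?thesis using wf(1) k by auto
  qed
  have B1: "B $$ (1,k) = 0" if k: "3 \<le> k" "k \<le> d" for k
  proof -
    have "\<not> Delta_adj d E As 1 k"
    proof
      assume adj: "Delta_adj d E As 1 k"
      let ?S = "{E j | j. j \<le> d \<and> Delta_adj d E As 1 j \<and> E j \<noteq> E 0}"
      have fin: "finite ?S"
      proof (rule finite_subset)
        show "?S \<subseteq> E ` {..d}" by auto
      qed auto
      have "E k \<in> ?S" using adj k Bd[of k 0] by auto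
      moreover have "E 2 \<in> ?S" using adj12 d3 Bd[of 2 0] unfolding As_def by auto
      ultimately have "{E 2, E k} \<subseteq> ?S" by auto
      hence "card {E 2, E k} \<le> card ?S" using fin by (rule card_mono[rotated])
      moreover have "card {E 2, E k} = 2" using Bd[of 2 k] k d3 by auto
      moreover have "card ?S \<le> 1" using tail unfolding is_tail_def As_def by auto
      ultimately show False by simp
    qed
    hence "E 1 * As * E k = 0\<^sub>m (d+1) (d+1)" using Bd[of 1 k] k unfolding Delta_adj_def by auto
    thus ?thesis using wf(1) k by auto
  qed
  have nd: "0 < n" "1 < n" "2 < n" "d < n" "d - 1 < n" using d3 n_def by auto
  have R0: "X $$ (0,i) * ths i = B $$ (0,0) * X $$ (0,i) + B $$ (0,1) * X $$ (1,i)" if i: "i < n" for i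
  proof -
    have "X $$ (0,i) * ths i = (\<Sum>k\<in>{0..<n}. B $$ (0,k) * X $$ (k,i))" by (rule XTe[OF nd(1) i])
    also have "\<dots> = B $$ (0,0) * X $$ (0,i) + B $$ (0,1) * X $$ (1,i)"
      by (rule sum_two) (use nd B0 n_def in auto)
    finally show ?thesis .
  qed
  have R1: "X $$ (1,i) * ths i = B $$ (1,0) * X $$ (0,i) + B $$ (1,1) * X $$ (1,i) + B $$ (1,2) * X $$ (2,i)"
    if i: "i < n" for i
  proof -
    have "X $$ (1,i) * ths i = (\<Sum>k\<in>{0..<n}. B $$ (1,k) * X $$ (k,i))" by (rule XTe[OF nd(2) i])
    also have "\<dots> = B $$ (1,0) * X $$ (0,i) + B $$ (1,1) * X $$ (1,i) + B $$ (1,2) * X $$ (2,i)"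
      by (rule sum_three) (use nd B1 n_def in auto)
    finally show ?thesis .
  qed
  have Yz: "Y $$ (k,j) = 0" if "k \<le> d" "j \<le> d" "nat \<bar>int k - int j\<bar> \<noteq> 1" for k j
    using pf2(2) that by blast
  have Ynz: "Y $$ (k,j) \<noteq> 0" if "k \<le> d" "j \<le> d" "nat \<bar>int k - int j\<bar> = 1" for k j
    using pf2(3) that by blast
  have C0: "X $$ (j,1) * Y $$ (1,0) = th j * X $$ (j,0)" if j: "j < n" for j
  proof -
    have "(\<Sum>k\<in>{0..<n}. X $$ (j,k) * Y $$ (k,0)) = X $$ (j,1) * Y $$ (1,0)"
      by (rule sum_single) (use nd n_def in \<open>auto simp: Yz\<close>)
    thus ?thesis using XYe[OF j nd(1)] by simp
  qed
  have Cd: "X $$ (j,d-1) * Y $$ (d-1,d) = th j * X $$ (j,d)" if j: "j < n" for j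
  proof -
    have "(\<Sum>k\<in>{0..<n}. X $$ (j,k) * Y $$ (k,d)) = X $$ (j,d-1) * Y $$ (d-1,d)"
      by (rule sum_single) (use nd n_def d3 in \<open>auto simp: Yz\<close>)
    thus ?thesis using XYe[OF j nd(4)] by simp
  qed
  have Cm: "X $$ (0,c-1) * Y $$ (c-1,c) + X $$ (0,c+1) * Y $$ (c+1,c) = th 0 * X $$ (0,c)"
    if c: "1 \<le> c" "c + 1 \<le> d" for c
  proof -
    have "(\<Sum>k\<in>{0..<n}. X $$ (0,k) * Y $$ (k,c)) = X $$ (0,c-1) * Y $$ (c-1,c) + X $$ (0,c+1) * Y $$ (c+1,c)"
      by (rule sum_two) (use c n_def in \<open>auto simp: Yz\<close>)
    thus ?thesis using XYe[OF nd(1), of c] c n_def by simp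
  qed
  have x00: "X $$ (0,0) \<noteq> 0"
  proof
    assume z: "X $$ (0,0) = 0"
    have "\<forall>i\<le>d. X $$ (0,i) = 0"
    proof (rule propagate[where y = "\<lambda>k i. Y $$ (k,i)" and \<theta> = "th 0"])
      show "X $$ (0,1) * Y $$ (1,0) = th 0 * X $$ (0,0)" using C0[OF nd(1)] .
      show "X $$ (0,i) * Y $$ (i,i+1) + X $$ (0,i+2) * Y $$ (i+2,i+1) = th 0 * X $$ (0,i+1)"
        if "i + 2 \<le> d" for i using Cm[of "i+1"] that by (simp add: add.commute)
      show "Y $$ (i+1,i) \<noteq> 0" if "i + 1 \<le> d" for i using Ynz[of "i+1" i] that by simp
    qed (use z d3 in auto)
    thus False using row0 n_def by auto
  qed
  have x0d: "X $$ (0,d) \<noteq> 0"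
  proof
    assume z: "X $$ (0,d) = 0"
    have "\<forall>i\<le>d. X $$ (0,d-i) = 0"
    proof (rule propagate[where x = "\<lambda>i. X $$ (0,d-i)" and y = "\<lambda>k i. Y $$ (d-k,d-i)" and \<theta> = "th 0"])
      show "X $$ (0,d-1) * Y $$ (d-1,d-0) = th 0 * X $$ (0,d-0)" using Cd[OF nd(1)] by simp
      show "X $$ (0,d-i) * Y $$ (d-i,d-(i+1)) + X $$ (0,d-(i+2)) * Y $$ (d-(i+2),d-(i+1)) = th 0 * X $$ (0,d-(i+1))"
        if "i + 2 \<le> d" for i
      proof -
        have e: "d-(i+1)-1 = d-(i+2)" "d-(i+1)+1 = d-i" using that by auto
        show ?thesis using Cm[of "d-(i+1)"] that unfolding e by (simp add: add.commute)
      qed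
      show "Y $$ (d-(i+1),d-i) \<noteq> 0" if "i + 1 \<le> d" for i using Ynz[of "d-(i+1)" "d-i"] that by simp
    qed (use z d3 in auto)
    hence "\<forall>i\<le>d. X $$ (0,i) = 0"
      by (metis diff_diff_cancel diff_le_self)
    thus False using row0 n_def by auto
  qed
  define t0 where "t0 = th 0"
  define t1 where "t1 = th 1"
  define t2 where "t2 = th 2"
  have L1: "X $$ (0,0) * (t0*(ths 1 - B $$ (0,0)) - t1*(ths 0 - B $$ (0,0))) = 0"
    unfolding t0_def t1_def
    by (rule lev1[OF C0[OF nd(1)] C0[OF nd(2)] R0[OF nd(1)] R0[OF nd(2)]])
  have L2: "X $$ (0,d) * (t0*(ths (d-1) - B $$ (0,0)) - t1*(ths d - B $$ (0,0))) = 0"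
    unfolding t0_def t1_def
    by (rule lev1[OF Cd[OF nd(1)] Cd[OF nd(2)] R0[OF nd(4)] R0[OF nd(5)]])
  have L3: "X $$ (0,0) * (t0*((ths 1 - B $$ (0,0))*(ths 1 - B $$ (1,1)) - B $$ (0,1)*B $$ (1,0))
       - t2*((ths 0 - B $$ (0,0))*(ths 0 - B $$ (1,1)) - B $$ (0,1)*B $$ (1,0))) = 0"
    unfolding t0_def t2_def
    by (rule lev2[OF C0[OF nd(1)] C0[OF nd(3)] R0[OF nd(1)] R0[OF nd(2)] R1[OF nd(1)] R1[OF nd(2)]])
  have L4: "X $$ (0,d) * (t0*((ths (d-1) - B $$ (0,0))*(ths (d-1) - B $$ (1,1)) - B $$ (0,1)*B $$ (1,0))
       - t2*((ths d - B $$ (0,0))*(ths d - B $$ (1,1)) - B $$ (0,1)*B $$ (1,0))) = 0"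
    unfolding t0_def t2_def
    by (rule lev2[OF Cd[OF nd(1)] Cd[OF nd(3)] R0[OF nd(4)] R0[OF nd(5)] R1[OF nd(4)] R1[OF nd(5)]])
  have sc: "ths 1 + ths 0 - B $$ (1,1) - B $$ (0,0) = (t1 * (ths (d-1) - ths 0) - t2 * (ths d - ths 1)) / (t2 - t1)
     \<and> B $$ (0,0) * B $$ (1,1) - B $$ (0,1)*B $$ (1,0) - ths 0 * ths 1 = (t2 * ths 0 - t0 * ths 1) / (t2 - t0)
                 * ((t2 * (ths d - ths 1) - t1 * (ths (d-1) - ths 0)) / (t2 - t1))"
  proof (rule scalar_part)
    show "t0 * (ths 1 - B $$ (0,0)) = t1 * (ths 0 - B $$ (0,0))" using L1 x00 by simp
    show "t1 * (ths d - B $$ (0,0)) = t0 * (ths (d-1) - B $$ (0,0))" using L2 x0d by simp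
    show "t0 * ((ths 1 - B $$ (0,0))*(ths 1 - B $$ (1,1)) - B $$ (0,1)*B $$ (1,0))
        = t2 * ((ths 0 - B $$ (0,0))*(ths 0 - B $$ (1,1)) - B $$ (0,1)*B $$ (1,0))" using L3 x00 by simp
    show "t2 * ((ths d - B $$ (0,0))*(ths d - B $$ (1,1)) - B $$ (0,1)*B $$ (1,0))
        = t0 * ((ths (d-1) - B $$ (0,0))*(ths (d-1) - B $$ (1,1)) - B $$ (0,1)*B $$ (1,0))" using L4 x0d by simp
    show "t2 \<noteq> t1" "t2 \<noteq> t0" unfolding t0_def t1_def t2_def using thd d3 by auto
    show "ths d \<noteq> ths 0" using ths_dist d3 by auto
  qed
  have as: "mtrace (E 0 * As) = B $$ (0,0)" "mtrace (E 1 * As) = B $$ (1,1)" using wf(2) d3 by auto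
  show ?thesis unfolding Let_def As_def[symmetric] as using sc unfolding t0_def t1_def t2_def by simp
qed

end
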